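(* Let $\epsilon>0$ and let $T$ be a tournament on $n$ vertices which is $\epsilon$-far from being transitive. Let $v_1,\ldots,v_n$ be an optimal ordering of $V(T)$ and let $B$ be the set of backwards edges in this ordering. Then at least one of the following holds: (1) the subset $B'\subseteq B$ consisting of the backwards edges of length at least $n/16$ satisfies $|B'|\ge |B|/4$; (2) $T$ contains a subtournament on at least $n/8$ vertices which is $2\epsilon$-far from being transitive.
   Context: Given an ordering $v_1,\ldots,v_n$ of the vertices of a tournament $T$, a backwards edge is an edge directed from $v_j$ to $v_i$ with $i<j$; its length is $j-i$. An ordering is optimal if it minimizes the number of backwards edges among all orderings of $V(T)$. An $m$-vertex tournament is $\delta$-far from being transitive if every ordering of its vertices has at least $\delta m^2$ backwards edges (equivalently, at least $\delta m^2$ edge directions must be switched in any ordering to make it transitive). *)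

theory Defs
  imports Complex_Main
begin

definition tournament :: "'a set \<Rightarrow> ('a \<Rightarrow> 'a \<Rightarrow> bool) \<Rightarrow> bool" where
  "tournament V E \<longleftrightarrow> finite V \<and> (\<forall>u\<in>V. \<not> E u u) \<and>
     (\<forall>u\<in>V. \<forall>v\<in>V. u \<noteq> v \<longrightarrow> (E u v \<longleftrightarrow> \<not> E v u))"

definition is_ordering :: "'a set \<Rightarrow> 'a list \<Rightarrow> bool" where
  "is_ordering V vs \<longleftrightarrow> distinct vs \<and> set vs = V"

text \<open>Backwards edges of an ordering, as index pairs (i,j) with i<j and edge v_j -> v_i;
  the length of such an edge is j - i.\<close>
definition backedges :: "('a \<Rightarrow> 'a \<Rightarrow> bool) \<Rightarrow> 'a list \<Rightarrow> (nat \<times> nat) set" where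
  "backedges E vs = {(i, j). i < j \<and> j < length vs \<and> E (vs ! j) (vs ! i)}"

definition optimal_ordering :: "'a set \<Rightarrow> ('a \<Rightarrow> 'a \<Rightarrow> bool) \<Rightarrow> 'a list \<Rightarrow> bool" where
  "optimal_ordering V E vs \<longleftrightarrow> is_ordering V vs \<and>
     (\<forall>ws. is_ordering V ws \<longrightarrow> card (backedges E vs) \<le> card (backedges E ws))"

definition far_from_transitive :: "'a set \<Rightarrow> ('a \<Rightarrow> 'a \<Rightarrow> bool) \<Rightarrow> real \<Rightarrow> bool" where
  "far_from_transitive V E \<delta> \<longleftrightarrow>
     (\<forall>ws. is_ordering V ws \<longrightarrow> real (card (backedges E ws)) \<ge> \<delta> * (real (card V))^2)"

end

theory Submission
  imports Defs
begin

definition before :: "'a list \<Rightarrow> 'a \<Rightarrow> 'a \<Rightarrow> bool" where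
  "before xs x y \<longleftrightarrow> (\<exists>i j. i < j \<and> j < length xs \<and> xs!i = x \<and> xs!j = y)"

definition bp :: "('a \<Rightarrow> 'a \<Rightarrow> bool) \<Rightarrow> 'a list \<Rightarrow> ('a \<times> 'a) set" where
  "bp E xs = {(x,y). before xs x y \<and> E y x}"

lemma before_set: "before xs x y \<Longrightarrow> x \<in> set xs \<and> y \<in> set xs"
  unfolding before_def by auto

lemma before_append:
  "before (xs @ ys) x y \<longleftrightarrow> before xs x y \<or> before ys x y \<or> (x \<in> set xs \<and> y \<in> set ys)"
proof
  assume "before (xs @ ys) x y"
  then obtain i j where ij: "i < j" "j < length (xs@ys)" "(xs@ys)!i = x" "(xs@ys)!j = y"
    unfolding before_def by blast
  show "before xs x y \<or> before ys x y \<or> (x \<in> set xs \<and> y \<in> set ys)"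
  proof (cases "j < length xs")
    case True
    then have "before xs x y" using ij unfolding before_def
      by (metis dual_order.strict_trans nth_append)
    then show ?thesis by simp
  next
    case False
    note F = False
    show ?thesis
    proof (cases "i < length xs")
      case True
      then have "x \<in> set xs" using ij by (metis nth_append nth_mem)
      moreover have "y \<in> set ys" using ij F by (auto simp: nth_append)
      ultimately show ?thesis by simp
    next
      case False
      then have "before ys x y" using ij F unfolding before_def
        apply (rule_tac x="i - length xs" in exI)
        apply (rule_tac x="j - length xs" in exI)
        by (auto simp: nth_append)
      then show ?thesis by simp
    qed
  qed
next
  assume "before xs x y \<or> before ys x y \<or> (x \<in> set xs \<and> y \<in> set ys)"
  then show "before (xs @ ys) x y"
  proof (elim disjE)
    assume "before xs x y"
    then obtain i j where "i < j" "j < length xs" "xs!i = x" "xs!j = y"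
      unfolding before_def by blast
    then show ?thesis unfolding before_def
      by (rule_tac x=i in exI, rule_tac x=j in exI) (auto simp: nth_append)
  next
    assume "before ys x y"
    then obtain i j where "i < j" "j < length ys" "ys!i = x" "ys!j = y"
      unfolding before_def by blast
    then show ?thesis unfolding before_def
      by (rule_tac x="i + length xs" in exI, rule_tac x="j + length xs" in exI) (auto simp: nth_append)
  next
    assume "x \<in> set xs \<and> y \<in> set ys"
    then obtain i j where "i < length xs" "xs!i = x" "j < length ys" "ys!j = y"
      by (meson in_set_conv_nth)
    then show ?thesis unfolding before_def
      by (rule_tac x="i" in exI, rule_tac x="j + length xs" in exI) (auto simp: nth_append)
  qed
qed

lemma finite_backedges: "finite (backedges E xs)"
proof -
  have "backedges E xs \<subseteq> {..<length xs} \<times> {..<length xs}"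
    unfolding backedges_def by auto
  then show ?thesis by (rule finite_subset) auto
qed

lemma finite_bp: "finite (bp E xs)"
proof -
  have "bp E xs \<subseteq> set xs \<times> set xs" unfolding bp_def using before_set by fastforce
  then show ?thesis by (rule finite_subset) auto
qed

lemma card_bp:
  assumes "distinct xs"
  shows "card (backedges E xs) = card (bp E xs)"
proof -
  have eq: "bp E xs = (\<lambda>(i,j). (xs!i, xs!j)) ` backedges E xs"
    unfolding bp_def backedges_def before_def by auto
  have "inj_on (\<lambda>(i,j). (xs!i, xs!j)) (backedges E xs)"
    unfolding inj_on_def backedges_def using assms
    by (auto simp: nth_eq_iff_index_eq)
  then show ?thesis unfolding eq by (simp add: card_image)
qed

definition Xc :: "('a \<Rightarrow> 'a \<Rightarrow> bool) \<Rightarrow> 'a list \<Rightarrow> 'a set \<Rightarrow> 'a list \<Rightarrow> ('a \<times> 'a) set" where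
  "Xc E P U S = bp E P \<union> bp E S \<union> {(x,y). E y x \<and> ((x \<in> set P \<and> (y \<in> U \<or> y \<in> set S)) \<or> (x \<in> U \<and> y \<in> set S))}"

lemma bp_app3: "bp E (P @ U @ S) = Xc E P (set U) S \<union> bp E U"
  unfolding Xc_def bp_def by (auto simp: before_append)

lemma card_bp_app3:
  assumes "distinct (P @ U @ S)"
  shows "card (bp E (P @ U @ S)) = card (Xc E P (set U) S) + card (bp E U)"
proof -
  have fX: "finite (Xc E P (set U) S)" unfolding Xc_def
  proof -
    have "{(x,y). E y x \<and> ((x \<in> set P \<and> (y \<in> set U \<or> y \<in> set S)) \<or> (x \<in> set U \<and> y \<in> set S))}
      \<subseteq> set (P@U@S) \<times> set (P@U@S)" by auto
    then have "finite {(x,y). E y x \<and> ((x \<in> set P \<and> (y \<in> set U \<or> y \<in> set S)) \<or> (x \<in> set U \<and> y \<in> set S))}"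
      by (rule finite_subset) auto
    then show "finite (bp E P \<union> bp E S \<union> {(x,y). E y x \<and> ((x \<in> set P \<and> (y \<in> set U \<or> y \<in> set S)) \<or> (x \<in> set U \<and> y \<in> set S))})"
      using finite_bp by auto
  qed
  have d1: "set P \<inter> set U = {}" "set U \<inter> set S = {}" "set P \<inter> set S = {}" using assms by auto
  have "Xc E P (set U) S \<inter> bp E U = {}"
  proof -
    have "bp E U \<subseteq> set U \<times> set U" unfolding bp_def using before_set by fastforce
    moreover have "bp E P \<subseteq> set P \<times> set P" unfolding bp_def using before_set by fastforce
    moreover have "bp E S \<subseteq> set S \<times> set S" unfolding bp_def using before_set by fastforce
    ultimately show ?thesis unfolding Xc_def using d1 by blast
  qed
  then show ?thesis unfolding bp_app3 using card_Un_disjoint[OF fX finite_bp] by simp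
qed

lemma seg_opt:
  assumes opt: "optimal_ordering V E vs" and am: "a + m \<le> length vs"
    and us: "is_ordering (set (take m (drop a vs))) us"
  shows "card (backedges E (take m (drop a vs))) \<le> card (backedges E us)"
proof -
  define P where "P = take a vs"
  define U where "U = take m (drop a vs)"
  define S where "S = drop (a+m) vs"
  have vs: "vs = P @ U @ S" unfolding P_def U_def S_def
    by (metis add.commute append_take_drop_id drop_drop)
  have dv: "distinct vs" and sv: "set vs = V" using opt unfolding optimal_ordering_def is_ordering_def by auto
  have su: "set us = set U" and du: "distinct us" using us unfolding is_ordering_def U_def by auto
  have dv': "distinct (P @ us @ S)" using dv su du unfolding vs by auto
  have sv': "set (P @ us @ S) = V" using sv su unfolding vs by auto
  have "card (backedges E vs) \<le> card (backedges E (P @ us @ S))"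
    using opt dv' sv' unfolding optimal_ordering_def is_ordering_def by auto
  then have "card (bp E (P @ U @ S)) \<le> card (bp E (P @ us @ S))"
    using card_bp dv dv' vs by metis
  then have "card (bp E U) \<le> card (bp E us)"
    using card_bp_app3[OF dv'] card_bp_app3[of P U S E] dv vs su by simp
  then show ?thesis using card_bp du dv vs unfolding U_def
    by (metis distinct_append)
qed

lemma within_le:
  assumes am: "a + m \<le> length vs"
  shows "card {(i,j) \<in> backedges E vs. a \<le> i \<and> j < a + m} \<le> card (backedges E (take m (drop a vs)))"
proof -
  have "inj_on (\<lambda>(i,j). (i - a, j - a)) {(i,j) \<in> backedges E vs. a \<le> i \<and> j < a + m}"
    unfolding inj_on_def backedges_def by auto
  moreover have "(\<lambda>(i,j). (i - a, j - a)) ` {(i,j) \<in> backedges E vs. a \<le> i \<and> j < a + m}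
      \<subseteq> backedges E (take m (drop a vs))"
    unfolding backedges_def using am by (auto simp: nth_take nth_drop)
  ultimately show ?thesis using finite_backedges by (rule card_inj_on_le)
qed

lemma params:
  fixes n :: nat
  assumes "n \<ge> 17"
  shows "\<exists>m h K. 1 \<le> h \<and> h \<le> m \<and> m \<le> n \<and> n \<le> 8*m \<and> n \<le> 16*(m-h+1) \<and> n - m \<le> (K-1)*h
     \<and> 8*K*m*m \<le> 3*n*n \<and> 1 \<le> K"
proof (cases "n \<ge> 64")
  case True
  define q where "q = n div 16"
  have q4: "q \<ge> 4" using True unfolding q_def by simp
  have nq: "16*q \<le> n" "n \<le> 16*q+15" unfolding q_def by auto
  have "8*15*(2*q+2)*(2*q+2) \<le> 3*n*n"
  proof -
    have "8*15*(2*q+2)*(2*q+2) = 480*q*q + 960*q + 480" by (simp add: algebra_simps)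
    also have "... \<le> 768*q*q"
    proof -
      have "288*q*q \<ge> 288*4*q" using q4 by simp
      then show ?thesis using q4 by linarith
    qed
    also have "... \<le> 3*n*n" using nq(1) mult_le_mono[OF nq(1) nq(1)] by simp
    finally show ?thesis .
  qed
  then show ?thesis using nq q4
    by (rule_tac x="2*q+2" in exI, rule_tac x="q+2" in exI, rule_tac x=15 in exI) simp
next
  case False
  then have "n < 64" by simp
  define C where "C = (\<lambda>n m h K. 1 \<le> h \<and> h \<le> m \<and> m \<le> n \<and> n \<le> 8*m \<and> n \<le> 16*(m-h+1) \<and> n - m \<le> (K-1)*h
     \<and> 8*K*m*m \<le> 3*n*n \<and> 1 \<le> (K::nat))"
  have all: "\<forall>x\<in>set [17..<64]. C x ((x+7) div 8) ((x+7) div 8 - (x-1) div 16)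
     ((x - (x+7) div 8 + ((x+7) div 8 - (x-1) div 16) - 1) div ((x+7) div 8 - (x-1) div 16) + 1)"
    unfolding C_def by (simp add: upt_rec)
  have nin: "n \<in> set [17..<64]" using assms \<open>n < 64\<close> by (simp only: set_upt) simp
  from bspec[OF all nin] have "C n ((n+7) div 8) ((n+7) div 8 - (n-1) div 16)
     ((n - (n+7) div 8 + ((n+7) div 8 - (n-1) div 16) - 1) div ((n+7) div 8 - (n-1) div 16) + 1)" .
  then show ?thesis unfolding C_def by blast
qed

theorem mainTheorem3:
  fixes V :: "'a set" and E :: "'a \<Rightarrow> 'a \<Rightarrow> bool" and \<epsilon> :: real and vs :: "'a list"
  assumes "\<epsilon> > 0"
    and "tournament V E"
    and "far_from_transitive V E \<epsilon>"
    and "optimal_ordering V E vs"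
  shows "real (card {(i, j) \<in> backedges E vs. real (j - i) \<ge> real (card V) / 16})
           \<ge> real (card (backedges E vs)) / 4
       \<or> (\<exists>S \<subseteq> V. real (card S) \<ge> real (card V) / 8 \<and> far_from_transitive S E (2 * \<epsilon>))"
proof -
  define n where "n = card V"
  define B where "B = backedges E vs"
  define L where "L = {(i, j) \<in> B. real (j - i) \<ge> real n / 16}"
  have dv: "distinct vs" and sv: "set vs = V" using assms(4)
    unfolding optimal_ordering_def is_ordering_def by auto
  have len: "length vs = n" unfolding n_def using dv sv distinct_card by metis
  have fB: "finite B" unfolding B_def by (rule finite_backedges)
  show ?thesis
  proof (cases "n \<le> 16")
    case True
    have "L = B"
    proof -
      have "real (j - i) \<ge> real n / 16" if "(i,j) \<in> B" for i j
      proof -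
        have "i < j" using that unfolding B_def backedges_def by auto
        then have "real (j - i) \<ge> 1" by simp
        moreover have "real n / 16 \<le> 1" using True by simp
        ultimately show ?thesis by linarith
      qed
      then show ?thesis unfolding L_def by auto
    qed
    then have "real (card L) \<ge> real (card B) / 4" by simp
    then show ?thesis unfolding L_def B_def n_def by blast
  next
    case False
    then have n17: "n \<ge> 17" by simp
    show ?thesis
    proof (rule ccontr)
      assume neg: "\<not> ?thesis"
      then have n1: "real (card L) < real (card B) / 4" unfolding L_def B_def n_def by auto
      from neg have n2: "\<And>S. S \<subseteq> V \<Longrightarrow> real (card S) \<ge> real n / 8 \<Longrightarrow> \<not> far_from_transitive S E (2 * \<epsilon>)"
        unfolding n_def by auto
      obtain m h K where p: "1 \<le> h" "h \<le> m" "m \<le> n" "n \<le> 8*m" "n \<le> 16*(m-h+1)"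
        "n - m \<le> (K-1)*h" "8*K*m*m \<le> 3*n*n" "1 \<le> K"
        using params[OF n17] by blast
      define Sh where "Sh = {(i, j) \<in> B. 16 * (j - i) < n}"
      have BLS: "B = L \<union> Sh" and dLS: "L \<inter> Sh = {}"
        unfolding L_def Sh_def by auto
      have cB: "card B = card L + card Sh"
        using BLS dLS fB card_Un_disjoint by (metis finite_Un)
      define s where "s = (\<lambda>t. min (t*h) (n-m))"
      define W where "W = (\<lambda>t. {(i,j) \<in> B. s t \<le> i \<and> j < s t + m})"
      have sm: "s t + m \<le> length vs" for t unfolding s_def len using p by auto
      have cover: "Sh \<subseteq> (\<Union>t<K. W t)"
      proof
        fix x assume "x \<in> Sh"
        then obtain i j where x: "x = (i,j)" "(i,j) \<in> B" "16*(j-i) < n" unfolding Sh_def by auto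
        have ij: "i < j" "j < n" using x(2) len unfolding B_def backedges_def by auto
        define t where "t = min (i div h) (K-1)"
        have tK: "t < K" unfolding t_def using p by auto
        have th: "t*h \<le> i" unfolding t_def
          by (meson div_times_less_eq_dividend dual_order.trans min.cobounded1 mult_le_mono1)
        have "16*(j-i) < 16*(m-h+1)" using x(3) p(5) by linarith
        then have jl: "j - i \<le> m - h" by simp
        have "s t \<le> i \<and> j < s t + m"
        proof (cases "s t = n - m")
          case True then show ?thesis using th ij p unfolding s_def by auto
        next
          case False
          then have st: "s t = t*h" "t*h < n - m" unfolding s_def by auto
          have "t = i div h"
          proof (rule ccontr)
            assume "t \<noteq> i div h"
            then have "t = K - 1" unfolding t_def by auto
            then show False using st p(6) by auto
          qed
          then have "i < t*h + h" using p(1)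
            by (metis add.commute div_mult_mod_eq mod_less_divisor mult.commute nat_add_left_cancel_less le_less_trans less_le_trans order.refl zero_less_one le_add1 add_less_mono1 less_imp_le_nat not_less linorder_not_le)
          moreover have "j \<le> (m - h) + i" using jl by (simp add: le_diff_conv)
          ultimately have "j < t*h + m" using p(2) by (simp add: add.commute less_le_trans)
          then show ?thesis using st th by simp
        qed
        then show "x \<in> (\<Union>t<K. W t)" using tK x unfolding W_def by auto
      qed
      have Wb: "real (card (W t)) \<le> 2 * \<epsilon> * (real m)^2" for t
      proof -
        define seg where "seg = take m (drop (s t) vs)"
        have c1: "card (W t) \<le> card (backedges E seg)"
          unfolding W_def B_def seg_def using within_le[OF sm[of t]] by simp
        have lseg: "length seg = m" unfolding seg_def using sm[of t] by simp
        have dseg: "distinct seg" unfolding seg_def using dv by (simp add: distinct_take distinct_drop)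
        have cseg: "card (set seg) = m" using lseg dseg distinct_card by metis
        have sub: "set seg \<subseteq> V" unfolding seg_def using sv
          by (metis in_set_dropD in_set_takeD subsetI)
        have "real (card (set seg)) \<ge> real n / 8" using cseg p(4) by simp
        then have "\<not> far_from_transitive (set seg) E (2 * \<epsilon>)" using n2 sub by blast
        then obtain ws where ws: "is_ordering (set seg) ws"
          "real (card (backedges E ws)) < 2 * \<epsilon> * (real (card (set seg)))^2"
          unfolding far_from_transitive_def by auto
        have "card (backedges E seg) \<le> card (backedges E ws)"
          using seg_opt[OF assms(4) sm[of t]] ws(1) unfolding seg_def by simp
        then show ?thesis using c1 ws(2) cseg by simp
      qed
      have fW: "finite (W t)" for t unfolding W_def by (rule finite_subset[OF _ fB]) auto
      have "card Sh \<le> card (\<Union>t<K. W t)"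
        using cover fW by (simp add: card_mono)
      also have "\<dots> \<le> (\<Sum>t<K. card (W t))" by (rule card_UN_le) simp
      finally have "real (card Sh) \<le> real (\<Sum>t<K. card (W t))" by (rule of_nat_mono)
      also have "\<dots> = (\<Sum>t<K. real (card (W t)))" by (rule of_nat_sum)
      also have "\<dots> \<le> (\<Sum>t<K. 2 * \<epsilon> * (real m)^2)" by (rule sum_mono) (rule Wb)
      also have "\<dots> = \<epsilon> * (2 * real K * (real m)^2)" by simp
      also have "\<dots> \<le> \<epsilon> * (3/4 * (real n)^2)"
      proof -
        have "real (8*K*m*m) \<le> real (3*n*n)" using p(7) by linarith
        then have "2 * real K * (real m)^2 \<le> 3/4 * (real n)^2" by (simp add: power2_eq_square)
        then show ?thesis using assms(1) by (simp add: mult_left_mono)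
      qed
      also have "\<dots> \<le> 3/4 * real (card B)"
      proof -
        have "real (card B) \<ge> \<epsilon> * (real n)^2" using assms(3) dv sv
          unfolding far_from_transitive_def is_ordering_def B_def n_def by auto
        then show ?thesis by simp
      qed
      finally have "real (card Sh) \<le> 3/4 * real (card B)" .
      then show False using n1 cB by simp
    qed
  qed
qed

end
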